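(* Let $f$ be a tolerance function with $0<f(K)<K$ satisfying $$\lim_{K\to\infty}\frac{K-f(K)}{\ln K}=0.$$ Then $p=\lim_{n\to\infty}P(\mathbf y\in L(\mathbf x))>0$ implies $P(\mathbf y\in I(\mathbf x,f))=1$. Furthermore, if $p>0.5$, it suffices that $f$ satisfies $$\lim_{K\to\infty}\frac{K}{(K-f(K))\,2^{K-f(K)}}=+\infty$$ to obtain $P(\mathbf y\in I(\mathbf x,f))=1$.
   Context: Setting: $n$ instances form the dataset $\mathcal D=\mathcal D_n$; a forest $\Theta_K$ of $K$ axis-aligned causal trees is built on $\mathcal D$, the trees independent given $\mathcal D$. $L_k(\mathbf x)$ is the leaf of tree $k$ containing $\mathbf x$, $I(\mathbf x,\theta_k)$ its box; $P(\mathbf y\in L(\mathbf x))=P(\mathbf y\in L_k(\mathbf x)\mid\mathcal D)$, same for every $k$, with the events independent across $k$. LILI with $K$ trees under tolerance function $f$: $I(\mathbf x,\Theta_K,f)=\bigcup_{s>K-f(K)}\bigcup_{1\le i_1<\cdots<i_s\le K}\bigcap_{k=1}^sI(\mathbf x,\theta_{i_k})$, i.e. $\mathbf y\in I(\mathbf x,\Theta_K,f)$ iff the number of $k$ with $\mathbf y\in L_k(\mathbf x)$ exceeds $K-f(K)$; $P(\mathbf y\in I(\mathbf x,f)):=\lim_{K\to\infty}\lim_{n\to\infty}P(\mathbf y\in I(\mathbf x,\Theta_K,f)\mid\mathcal D_n)$. *)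

theory Defs
  imports "HOL-Probability.Probability"
begin

text \<open>Here E k is the event that y lies in the leaf L_k(x) of tree k.\<close>
definition lili_event :: "'a measure \<Rightarrow> (nat \<Rightarrow> 'a set) \<Rightarrow> nat \<Rightarrow> (nat \<Rightarrow> real) \<Rightarrow> 'a set" where
  "lili_event M E K f =
     (\<Union>S\<in>{S. S \<subseteq> {..<K} \<and> real (card S) > real K - f K}. space M \<inter> (\<Inter>k\<in>S. E k))"

end

theory Submission
  imports Defs "HOL-Real_Asymp.Real_Asymp"
begin

lemma (in prob_space) atom_prob:
  assumes ind: "indep_events A {..<K}" and pr: "\<And>k. k < K \<Longrightarrow> prob (A k) = x"
    and T: "T \<subseteq> {..<K}" and K: "K > 0"
  shows "prob (\<Inter>k\<in>{..<K}. if k \<in> T then A k else space M - A k) = x ^ card T * (1 - x) ^ (K - card T)"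
proof -
  have ev: "\<And>k. k < K \<Longrightarrow> A k \<in> events" using ind by (auto simp: indep_events_def)
  have "indep_sets (\<lambda>k. sigma_sets (space M) {A k}) {..<K}"
    by (rule indep_sets_sigma) (use ind in \<open>auto simp: indep_events_def_alt Int_stable_def\<close>)
  then have "prob (\<Inter>k\<in>{..<K}. if k \<in> T then A k else space M - A k)
      = (\<Prod>k\<in>{..<K}. prob (if k \<in> T then A k else space M - A k))"
    by (rule indep_setsD) (use K in \<open>auto intro: sigma_sets.Basic sigma_sets.Compl\<close>)
  also have "\<dots> = (\<Prod>k\<in>{..<K}. if k \<in> T then x else 1 - x)"
    by (rule prod.cong) (auto simp: prob_compl ev pr)
  also have "\<dots> = (\<Prod>k\<in>{..<K} \<inter> {k. k \<in> T}. x) * (\<Prod>k\<in>{..<K} \<inter> - {k. k \<in> T}. 1 - x)"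
    by (rule prod.If_cases) simp
  also have "{..<K} \<inter> {k. k \<in> T} = T" using T by auto
  also have "{..<K} \<inter> - {k. k \<in> T} = {..<K} - T" by auto
  finally show ?thesis using T by (simp add: card_Diff_subset finite_subset)
qed

lemma (in prob_space) event_sum:
  assumes ind: "indep_events A {..<K}" and pr: "\<And>k. k < K \<Longrightarrow> prob (A k) = x"
    and K: "K > 0"
  shows "prob {\<omega>\<in>space M. P {k\<in>{..<K}. \<omega> \<in> A k}}
     = (\<Sum>T\<in>{T. T \<subseteq> {..<K} \<and> P T}. x ^ card T * (1 - x) ^ (K - card T))"
proof -
  have ev: "\<And>k. k < K \<Longrightarrow> A k \<in> events" using ind by (auto simp: indep_events_def)
  define B where "B T = (\<Inter>k\<in>{..<K}. if k \<in> T then A k else space M - A k)" for T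
  have memB: "\<omega> \<in> B T \<longleftrightarrow> \<omega> \<in> space M \<and> {k\<in>{..<K}. \<omega> \<in> A k} = T"
    if "T \<subseteq> {..<K}" for T \<omega>
  proof -
    have sp: "\<omega> \<in> space M" if "\<omega> \<in> B T"
    proof -
      have "\<omega> \<in> (if 0 \<in> T then A 0 else space M - A 0)" using that K unfolding B_def by auto
      then show ?thesis using ev[OF K] sets.sets_into_space by (auto split: if_splits)
    qed
    show ?thesis using that sp unfolding B_def by auto
  qed
  have eq: "{\<omega>\<in>space M. P {k\<in>{..<K}. \<omega> \<in> A k}} = (\<Union>T\<in>{T. T \<subseteq> {..<K} \<and> P T}. B T)"
    using memB by auto
  have fin: "finite {T. T \<subseteq> {..<K} \<and> P T}" by (rule finite_subset[of _ "Pow {..<K}"]) auto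
  have Bev: "B T \<in> events" for T
    unfolding B_def using K ev by (intro sets.finite_INT) auto
  have "prob (\<Union>T\<in>{T. T \<subseteq> {..<K} \<and> P T}. B T) = (\<Sum>T\<in>{T. T \<subseteq> {..<K} \<and> P T}. prob (B T))"
    by (rule finite_measure_finite_Union) (use fin Bev memB in \<open>auto simp: disjoint_family_on_def\<close>)
  also have "\<dots> = (\<Sum>T\<in>{T. T \<subseteq> {..<K} \<and> P T}. x ^ card T * (1 - x) ^ (K - card T))"
    by (rule sum.cong[OF refl]) (unfold B_def, rule atom_prob[OF ind pr _ K], auto)
  finally show ?thesis using eq by simp
qed

lemma (in prob_space) event_sets:
  fixes K :: nat
  assumes ev: "\<And>k. k < K \<Longrightarrow> A k \<in> events" and K: "K > 0"
  shows "{\<omega>\<in>space M. P {k\<in>{..<K}. \<omega> \<in> A k}} \<in> events"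
proof -
  define B where "B T = (\<Inter>k\<in>{..<K}. if k \<in> T then A k else space M - A k)" for T
  have memB: "\<omega> \<in> B T \<longleftrightarrow> \<omega> \<in> space M \<and> {k\<in>{..<K}. \<omega> \<in> A k} = T"
    if "T \<subseteq> {..<K}" for T \<omega>
  proof -
    have sp: "\<omega> \<in> space M" if "\<omega> \<in> B T"
    proof -
      have "\<omega> \<in> (if 0 \<in> T then A 0 else space M - A 0)" using that K unfolding B_def by auto
      then show ?thesis using ev[OF K] sets.sets_into_space by (auto split: if_splits)
    qed
    show ?thesis using that sp unfolding B_def by auto
  qed
  have eq: "{\<omega>\<in>space M. P {k\<in>{..<K}. \<omega> \<in> A k}} = (\<Union>T\<in>{T. T \<subseteq> {..<K} \<and> P T}. B T)"
    using memB by auto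
  have "finite (Pow {..<K})" by simp
  then have fin: "finite {T. T \<subseteq> {..<K} \<and> P T}" by (rule finite_subset[rotated]) auto
  have Bev: "B T \<in> events" for T
    unfolding B_def using K ev by (intro sets.finite_INT) auto
  show ?thesis unfolding eq using fin Bev by (intro sets.finite_UN) auto
qed

lemma lili_eq: "lili_event M A K f = {\<omega>\<in>space M. real (card {k\<in>{..<K}. \<omega> \<in> A k}) > real K - f K}"
proof (rule set_eqI iffI)+
  fix \<omega>
  assume "\<omega> \<in> lili_event M A K f"
  then obtain S where S: "S \<subseteq> {..<K}" "real K - f K < real (card S)" "\<omega> \<in> space M" "\<forall>k\<in>S. \<omega> \<in> A k"
    unfolding lili_event_def by blast
  have "card S \<le> card {k\<in>{..<K}. \<omega> \<in> A k}"
    by (rule card_mono) (use S in auto)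
  then show "\<omega> \<in> {\<omega>\<in>space M. real (card {k\<in>{..<K}. \<omega> \<in> A k}) > real K - f K}"
    using S by simp
next
  fix \<omega>
  assume a: "\<omega> \<in> {\<omega>\<in>space M. real (card {k\<in>{..<K}. \<omega> \<in> A k}) > real K - f K}"
  show "\<omega> \<in> lili_event M A K f"
    unfolding lili_event_def
    by (rule UN_I[of "{k\<in>{..<K}. \<omega> \<in> A k}"]) (use a in auto)
qed

lemma card_small_subsets:
  fixes N K :: nat
  assumes "N < K"
  shows "card {T. T \<subseteq> {..<K} \<and> card T \<le> N} \<le> (N + 1) * K ^ N"
proof -
  have "{T. T \<subseteq> {..<K} \<and> card T \<le> N} = (\<Union>j\<in>{..N}. {T. T \<subseteq> {..<K} \<and> card T = j})" by auto
  then have "card {T. T \<subseteq> {..<K} \<and> card T \<le> N} \<le> (\<Sum>j\<in>{..N}. card {T. T \<subseteq> {..<K} \<and> card T = j})"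
    by (simp add: card_UN_le)
  also have "\<dots> = (\<Sum>j\<in>{..N}. K choose j)" by (simp add: n_subsets)
  also have "\<dots> \<le> (\<Sum>j\<in>{..N}. K ^ N)"
  proof (rule sum_mono)
    fix j assume "j \<in> {..N}"
    then have j: "j \<le> N" by simp
    have "K choose j \<le> K ^ j" using j assms by (intro binomial_le_pow) simp
    also have "\<dots> \<le> K ^ N" using j assms by (intro power_increasing) auto
    finally show "K choose j \<le> K ^ N" .
  qed
  also have "\<dots> = (N + 1) * K ^ N" by simp
  finally show ?thesis .
qed

lemma final_bound:
  fixes K N :: nat and C c r :: real
  assumes K1: "1 \<le> K" and NK: "N < K" and NC: "real N \<le> C * ln (real K) + 1"
    and r0: "0 \<le> r" and r1: "r < 1" and c_def: "c = (if r > 0 then - ln r else 1)" and Cpos: "C > 0"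
  shows "(real N + 1) * real K ^ N * r ^ (K - N)
    \<le> (C * ln (real K) + 2) * (exp ((C * ln (real K) + 1) * ln (real K)) * exp (- c * (real K - C * ln (real K) - 1)))"
proof -
  have lnK: "0 \<le> ln (real K)" using K1 by simp
  have a: "real N + 1 \<le> C * ln (real K) + 2" using NC by simp
  have "real K ^ N = exp (real N * ln (real K))"
    using K1 by (simp add: exp_of_nat_mult)
  also have "\<dots> \<le> exp ((C * ln (real K) + 1) * ln (real K))"
    using NC lnK by (simp add: mult_right_mono)
  finally have b: "real K ^ N \<le> exp ((C * ln (real K) + 1) * ln (real K))" .
  have cc: "r ^ (K - N) \<le> exp (- c * (real K - C * ln (real K) - 1))"
  proof (cases "r = 0")
    case True
    have "K - N > 0" using NK by simp
    then show ?thesis using True by (simp add: power_0_left)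
  next
    case False
    then have rp: "r > 0" using r0 by simp
    have cpos: "c > 0" using rp r1 c_def by simp
    have "r ^ (K - N) = exp (real (K - N) * ln r)"
      using rp by (simp add: exp_of_nat_mult)
    also have "\<dots> = exp (- c * (real K - real N))" using rp c_def NK by (simp add: of_nat_diff)
    also have "\<dots> \<le> exp (- c * (real K - C * ln (real K) - 1))"
      using NC cpos by (simp add: mult_left_mono)
    finally show ?thesis .
  qed
  have "(real N + 1) * real K ^ N * r ^ (K - N) = (real N + 1) * (real K ^ N * r ^ (K - N))" by simp
  also have "\<dots> \<le> (C * ln (real K) + 2) * (exp ((C * ln (real K) + 1) * ln (real K)) * exp (- c * (real K - C * ln (real K) - 1)))"
    using a b cc r0 by (intro mult_mono) auto
  finally show ?thesis .
qed

theorem mainTheorem14: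
  fixes M :: "nat \<Rightarrow> nat \<Rightarrow> 'a measure"
    and E :: "nat \<Rightarrow> nat \<Rightarrow> nat \<Rightarrow> 'a set"
    and pL :: "nat \<Rightarrow> real"
    and p :: real
    and f :: "nat \<Rightarrow> real"
  assumes ps: "\<And>n K. prob_space (M n K)"
    and meas: "\<And>n K k. k < K \<Longrightarrow> E n K k \<in> sets (M n K)"
    and indep: "\<And>n K. prob_space.indep_events (M n K) (E n K) {..<K}"
    and probL: "\<And>n K k. k < K \<Longrightarrow> measure (M n K) (E n K k) = pL n"
    and lim_p: "pL \<longlonglongrightarrow> p"
    and f_bounds: "\<And>K. K \<ge> 1 \<Longrightarrow> 0 < f K \<and> f K < real K"
  shows "(p > 0 \<and> ((\<lambda>K. (real K - f K) / ln (real K)) \<longlongrightarrow> 0) at_top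
            \<longrightarrow> (\<exists>q. (\<forall>K. (\<lambda>n. measure (M n K) (lili_event (M n K) (E n K) K f)) \<longlonglongrightarrow> q K)
                     \<and> q \<longlonglongrightarrow> 1))
       \<and> (p > 1/2 \<and> filterlim (\<lambda>K. real K / ((real K - f K) * 2 powr (real K - f K))) at_top at_top
            \<longrightarrow> (\<exists>q. (\<forall>K. (\<lambda>n. measure (M n K) (lili_event (M n K) (E n K) K f)) \<longlonglongrightarrow> q K)
                     \<and> q \<longlonglongrightarrow> 1))"
  proof -
  define m where "m K = real K - f K" for K
  define G where "G K P x = (\<Sum>T\<in>{T. T \<subseteq> {..<K} \<and> P T}. x ^ card T * (1 - x) ^ (K - card T))"
    for K and P :: "nat set \<Rightarrow> bool" and x :: real
  have meas_eq: "measure (M n K) (lili_event (M n K) (E n K) K f) = G K (\<lambda>T. m K < real (card T)) (pL n)"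
    if "K > 0" for n K
    unfolding lili_eq G_def m_def
    by (rule prob_space.event_sum[OF ps indep probL that])
  have compl_eq: "1 - measure (M n K) (lili_event (M n K) (E n K) K f) = G K (\<lambda>T. \<not> m K < real (card T)) (pL n)"
    if "K > 0" for n K
  proof -
    have "1 - measure (M n K) (lili_event (M n K) (E n K) K f)
        = measure (M n K) (space (M n K) - lili_event (M n K) (E n K) K f)"
      unfolding lili_eq
      by (rule prob_space.prob_compl[symmetric, OF ps], rule prob_space.event_sets[OF ps meas that])
    also have "space (M n K) - lili_event (M n K) (E n K) K f
       = {\<omega>\<in>space (M n K). \<not> m K < real (card {k\<in>{..<K}. \<omega> \<in> E n K k})}"
      unfolding lili_eq m_def by auto
    also have "measure (M n K) \<dots> = G K (\<lambda>T. \<not> m K < real (card T)) (pL n)"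
      unfolding G_def by (rule prob_space.event_sum[OF ps indep probL that])
    finally show ?thesis .
  qed
  have Gcont: "(\<lambda>n. G K P (pL n)) \<longlonglongrightarrow> G K P p" for K P
    unfolding G_def by (intro tendsto_intros lim_p)
  have pL01: "0 \<le> pL n \<and> pL n \<le> 1" for n
    using probL[of 0 1 n] prob_space.prob_le_1[OF ps[of n 1], of "E n 1 0"] measure_nonneg[of "M n 1" "E n 1 0"] by simp
  have p0: "0 \<le> p" by (rule LIMSEQ_le_const[OF lim_p]) (use pL01 in auto)
  have p1: "p \<le> 1" by (rule LIMSEQ_le_const2[OF lim_p]) (use pL01 in auto)
  define q where "q K = (if K = 0 then (if 0 < f 0 then 1 else 0) else G K (\<lambda>T. m K < real (card T)) p)" for K
  have conv: "\<forall>K. (\<lambda>n. measure (M n K) (lili_event (M n K) (E n K) K f)) \<longlonglongrightarrow> q K"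
  proof
    fix K show "(\<lambda>n. measure (M n K) (lili_event (M n K) (E n K) K f)) \<longlonglongrightarrow> q K"
    proof (cases "K = 0")
      case True
      have "measure (M n K) (lili_event (M n K) (E n K) K f) = q K" for n
        using True prob_space.prob_space[OF ps[of n 0]] by (simp add: lili_eq q_def)
      then show ?thesis by simp
    next
      case False
      then show ?thesis using Gcont by (simp add: meas_eq q_def)
    qed
  qed
  have omq: "1 - q K = G K (\<lambda>T. \<not> m K < real (card T)) p" if "K > 0" for K
  proof -
    have "(\<lambda>n. 1 - measure (M n K) (lili_event (M n K) (E n K) K f)) \<longlonglongrightarrow> 1 - q K"
      using conv by (intro tendsto_intros) auto
    moreover have "(\<lambda>n. 1 - measure (M n K) (lili_event (M n K) (E n K) K f)) \<longlonglongrightarrow> G K (\<lambda>T. \<not> m K < real (card T)) p"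
      using Gcont by (simp add: compl_eq that)
    ultimately show ?thesis by (rule LIMSEQ_unique)
  qed
  have core: "q \<longlonglongrightarrow> 1" if ppos: "p > 0" and Cpos: "C > 0"
    and ev: "eventually (\<lambda>K. m K \<le> C * ln (real K) + 1) at_top" for C
  proof -
    define r where "r = 1 - p"
    have r0: "0 \<le> r" and r1: "r < 1" using p1 ppos by (auto simp: r_def)
    define c where "c = (if r > 0 then - ln r else 1)"
    have c0: "c > 0" using r0 r1 by (auto simp: c_def)
    define h where "h K = (C * ln (real K) + 2) * (exp ((C * ln (real K) + 1) * ln (real K)) * exp (- c * (real K - C * ln (real K) - 1)))" for K :: nat
    have hlim: "h \<longlonglongrightarrow> 0" unfolding h_def using Cpos c0 by real_asymp
    have bound: "eventually (\<lambda>K. norm (1 - q K) \<le> h K) at_top"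
      using ev eventually_ge_at_top[of "1::nat"]
    proof eventually_elim
      case (elim K)
      have Kpos: "K > 0" using elim by simp
      have mpos: "0 < m K" "m K < real K" using f_bounds[OF elim(2)] by (auto simp: m_def)
      define N where "N = nat \<lfloor>m K\<rfloor>"
      have NK1: "real N \<le> m K" using mpos by (simp add: N_def)
      have NK2: "N < K" using NK1 mpos by linarith
      have Gnn: "0 \<le> G K P p" for P unfolding G_def using p0 p1 by (intro sum_nonneg) simp
      have fin: "finite {T. T \<subseteq> {..<K} \<and> card T \<le> N}"
      proof -
        have "finite (Pow {..<K})" by simp
        then show ?thesis by (rule finite_subset[rotated]) auto
      qed
      have "1 - q K = G K (\<lambda>T. \<not> m K < real (card T)) p" using omq Kpos by simp
      also have "\<dots> \<le> (\<Sum>T\<in>{T. T \<subseteq> {..<K} \<and> card T \<le> N}. p ^ card T * r ^ (K - card T))"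
        unfolding G_def r_def
      proof (rule sum_mono2[OF fin])
        show "{T. T \<subseteq> {..<K} \<and> \<not> m K < real (card T)} \<subseteq> {T. T \<subseteq> {..<K} \<and> card T \<le> N}"
          using mpos by (auto simp: N_def le_nat_floor)
      qed (use p0 p1 in auto)
      also have "\<dots> \<le> (\<Sum>T\<in>{T. T \<subseteq> {..<K} \<and> card T \<le> N}. r ^ (K - N))"
      proof (rule sum_mono)
        fix T assume T: "T \<in> {T. T \<subseteq> {..<K} \<and> card T \<le> N}"
        have p1': "p ^ card T \<le> 1" using p0 p1 by (simp add: power_le_one)
        have r': "r ^ (K - card T) \<le> r ^ (K - N)"
          using T r0 r1 by (intro power_decreasing) auto
        have "p ^ card T * r ^ (K - card T) \<le> 1 * r ^ (K - card T)"
          using p1' r0 by (intro mult_right_mono) auto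
        then show "p ^ card T * r ^ (K - card T) \<le> r ^ (K - N)"
          using r' by simp
      qed
      also have "\<dots> = real (card {T. T \<subseteq> {..<K} \<and> card T \<le> N}) * r ^ (K - N)" by simp
      also have "\<dots> \<le> real ((N + 1) * K ^ N) * r ^ (K - N)"
      proof (rule mult_right_mono)
        show "real (card {T. T \<subseteq> {..<K} \<and> card T \<le> N}) \<le> real ((N + 1) * K ^ N)"
          using card_small_subsets[OF NK2] by (simp only: of_nat_le_iff)
      qed (use r0 in simp)
      also have "\<dots> = (real N + 1) * real K ^ N * r ^ (K - N)" by (simp add: algebra_simps)
      also have "\<dots> \<le> h K" unfolding h_def
        by (rule final_bound[OF elim(2) NK2 _ r0 r1 c_def Cpos]) (use NK1 elim in simp)
      finally have "1 - q K \<le> h K" .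
      moreover have "0 \<le> 1 - q K" using omq[OF Kpos] Gnn by simp
      ultimately show ?case by simp
    qed
    have "(\<lambda>K. 1 - q K) \<longlonglongrightarrow> 0" by (rule Lim_null_comparison[OF bound hlim])
    then have "(\<lambda>K. 1 - (1 - q K)) \<longlonglongrightarrow> 1 - 0" by (intro tendsto_intros)
    then show ?thesis by simp
  qed
  show ?thesis
  proof (intro conjI impI)
    assume A: "0 < p \<and> ((\<lambda>K. (real K - f K) / ln (real K)) \<longlongrightarrow> 0) at_top"
    have "eventually (\<lambda>K. (real K - f K) / ln (real K) < 1) at_top"
      using A by (intro order_tendstoD(2)) auto
    then have "eventually (\<lambda>K. m K \<le> 1 * ln (real K) + 1) at_top"
      using eventually_ge_at_top[of "3::nat"]
    proof eventually_elim
      case (elim K)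
      have "ln (real K) > 0" using elim by simp
      then show ?case using elim by (simp add: m_def divide_less_eq)
    qed
    then show "\<exists>q. (\<forall>K. (\<lambda>n. measure (M n K) (lili_event (M n K) (E n K) K f)) \<longlonglongrightarrow> q K) \<and> q \<longlonglongrightarrow> 1"
      using conv core[of 1] A by auto
  next
    assume A: "1/2 < p \<and> filterlim (\<lambda>K. real K / ((real K - f K) * 2 powr (real K - f K))) at_top at_top"
    have "eventually (\<lambda>K. 1 \<le> real K / ((real K - f K) * 2 powr (real K - f K))) at_top"
      using A unfolding filterlim_at_top by blast
    then have "eventually (\<lambda>K. m K \<le> (1 / ln 2) * ln (real K) + 1) at_top"
      using eventually_ge_at_top[of "1::nat"]
    proof eventually_elim
      case (elim K)
      have mpos: "0 < m K" using f_bounds[OF elim(2)] by (auto simp: m_def)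
      have lnK: "0 \<le> ln (real K)" using elim by simp
      have "m K * 2 powr m K \<le> real K"
        using elim(1) mpos by (simp add: m_def le_divide_eq)
      show ?case
      proof (cases "m K \<ge> 1")
        case True
        have "2 powr m K \<le> m K * 2 powr m K" using True by simp
        also have "\<dots> \<le> real K" by fact
        finally have le: "2 powr m K \<le> real K" .
        have "ln (2 powr m K) \<le> ln (real K)" using le elim(2) by (subst ln_le_cancel_iff) auto
        then have "m K * ln 2 \<le> ln (real K)" by (simp add: ln_powr)
        then have "m K \<le> ln (real K) / ln 2" by (simp add: le_divide_eq)
        then show ?thesis by simp
      next
        case False
        have "0 \<le> ln (real K) / ln 2" using lnK by simp
        then show ?thesis using False by simp
      qed
    qed
    then show "\<exists>q. (\<forall>K. (\<lambda>n. measure (M n K) (lili_event (M n K) (E n K) K f)) \<longlonglongrightarrow> q K) \<and> q \<longlonglongrightarrow> 1"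
      using conv core[of "1 / ln 2"] A by auto
  qed
qed

end
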